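(* Let $n$ be a positive integer and let $\mathcal{B}$ be a balanced bipartite graph on $2n$ vertices with parts $V_1$ and $V_2$ such that $\delta(\mathcal{B})\geq\frac{n}{2}+1$. Let $S\subseteq V(\mathcal{B})$ with $|S|=n+1$ such that $\mathcal{B}[S]$ is a forest. If $\min\{|S\cap V_1|,|S\cap V_2|\}=2$, then $n$ is even.
   Context: All graphs are finite and simple. A balanced bipartite graph on $2n$ vertices is a bipartite graph with a given bipartition $(V_1,V_2)$ where $|V_1|=|V_2|=n$. $\delta(G)$ denotes the minimum degree of $G$, and $G[S]$ the subgraph induced by $S\subseteq V(G)$. *)

theory Defs
  imports Complex_Main
begin

definition simple_graph :: "'a set \<Rightarrow> ('a \<Rightarrow> 'a \<Rightarrow> bool) \<Rightarrow> bool" where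
  "simple_graph V E \<longleftrightarrow> finite V \<and> (\<forall>x y. E x y \<longrightarrow> E y x) \<and> (\<forall>x. \<not> E x x)
     \<and> (\<forall>x y. E x y \<longrightarrow> x \<in> V \<and> y \<in> V)"

definition balanced_bipartite :: "'a set \<Rightarrow> 'a set \<Rightarrow> ('a \<Rightarrow> 'a \<Rightarrow> bool) \<Rightarrow> nat \<Rightarrow> bool" where
  "balanced_bipartite V1 V2 E n \<longleftrightarrow> simple_graph (V1 \<union> V2) E \<and> V1 \<inter> V2 = {}
     \<and> card V1 = n \<and> card V2 = n
     \<and> (\<forall>x y. E x y \<longrightarrow> (x \<in> V1 \<and> y \<in> V2) \<or> (x \<in> V2 \<and> y \<in> V1))"

definition degree :: "'a set \<Rightarrow> ('a \<Rightarrow> 'a \<Rightarrow> bool) \<Rightarrow> 'a \<Rightarrow> nat" where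
  "degree V E v = card {u \<in> V. E v u}"

definition is_cycle :: "'a set \<Rightarrow> ('a \<Rightarrow> 'a \<Rightarrow> bool) \<Rightarrow> 'a list \<Rightarrow> bool" where
  "is_cycle V E cs \<longleftrightarrow> length cs \<ge> 3 \<and> distinct cs \<and> set cs \<subseteq> V
     \<and> (\<forall>i. Suc i < length cs \<longrightarrow> E (cs ! i) (cs ! Suc i))
     \<and> E (last cs) (hd cs)"

definition induced_forest :: "('a \<Rightarrow> 'a \<Rightarrow> bool) \<Rightarrow> 'a set \<Rightarrow> bool" where
  "induced_forest E S \<longleftrightarrow> (\<nexists>cs. is_cycle S E cs)"

end

theory Submission
  imports Defs
begin

lemma key:
  fixes X Y S :: "'a set" and E :: "'a \<Rightarrow> 'a \<Rightarrow> bool" and n :: nat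
  assumes fin: "finite X" "finite Y" and disj: "X \<inter> Y = {}"
    and cX: "card X = n" and cY: "card Y = n"
    and bip: "\<forall>x y. E x y \<longrightarrow> (x \<in> X \<and> y \<in> Y) \<or> (x \<in> Y \<and> y \<in> X)"
    and sym: "\<forall>x y. E x y \<longrightarrow> E y x"
    and deg: "\<forall>v \<in> X. real (card {u \<in> X \<union> Y. E v u}) \<ge> real n / 2 + 1"
    and SS: "S \<subseteq> X \<union> Y" and cS: "card S = n + 1"
    and forest: "induced_forest E S"
    and c2: "card (S \<inter> X) = 2"
  shows "even n"
proof -
  define T where "T = S \<inter> Y"
  have finS: "finite S" using SS fin by (meson finite_Un finite_subset)
  have "S = (S \<inter> X) \<union> T" using SS T_def by auto
  moreover have "(S \<inter> X) \<inter> T = {}" using disj T_def by auto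
  ultimately have "card S = card (S \<inter> X) + card T"
    using finS by (metis card_Un_disjoint finite_Int finite_Un)
  hence cT: "card T + 1 = n" using cS c2 by simp
  have TY: "T \<subseteq> Y" using T_def by auto
  have finT: "finite T" using TY fin finite_subset by blast
  have cYT: "card (Y - T) = 1" using cY cT card_Diff_subset[OF finT TY] by simp
  obtain a b where ab: "S \<inter> X = {a, b}" "a \<noteq> b" using c2 card_2_iff by metis
  have aX: "a \<in> X" "a \<in> S" "b \<in> X" "b \<in> S" using ab by auto
  define Na where "Na = {u \<in> T. E a u}"
  define Nb where "Nb = {u \<in> T. E b u}"
  have bound: "card {u \<in> X \<union> Y. E v u} \<le> card {u \<in> T. E v u} + 1" if "v \<in> X" for v
  proof -
    have "{u \<in> X \<union> Y. E v u} \<subseteq> {u \<in> T. E v u} \<union> (Y - T)"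
      using bip that disj by auto
    hence "card {u \<in> X \<union> Y. E v u} \<le> card ({u \<in> T. E v u} \<union> (Y - T))"
      by (intro card_mono) (use finT fin in auto)
    also have "\<dots> \<le> card {u \<in> T. E v u} + card (Y - T)" by (rule card_Un_le)
    finally show ?thesis using cYT by simp
  qed
  have r1: "real (card {u \<in> X \<union> Y. E a u}) \<le> real (card Na) + 1"
    using bound[OF aX(1)] unfolding Na_def by (metis of_nat_1 of_nat_add of_nat_le_iff)
  have r2: "real (card {u \<in> X \<union> Y. E b u}) \<le> real (card Nb) + 1"
    using bound[OF aX(3)] unfolding Nb_def by (metis of_nat_1 of_nat_add of_nat_le_iff)
  have ha: "real n / 2 + 1 \<le> real (card Na) + 1"
    using deg aX(1) r1 by fastforce
  have hb: "real n / 2 + 1 \<le> real (card Nb) + 1"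
    using deg aX(3) r2 by fastforce
  have inter: "card (Na \<inter> Nb) \<le> 1"
  proof (rule ccontr)
    assume "\<not> card (Na \<inter> Nb) \<le> 1"
    moreover have "finite (Na \<inter> Nb)" using finT Na_def by auto
    ultimately obtain x y where xy: "x \<in> Na \<inter> Nb" "y \<in> Na \<inter> Nb" "x \<noteq> y"
      using card_le_Suc0_iff_eq by (metis One_nat_def)
    hence xyY: "x \<in> Y" "y \<in> Y" "x \<in> S" "y \<in> S" using TY T_def Na_def by auto
    have E: "E a x" "E b x" "E a y" "E b y" using xy Na_def Nb_def by auto
    have "is_cycle S E [a, x, b, y]"
      unfolding is_cycle_def
    proof (intro conjI allI impI)
      show "distinct [a, x, b, y]" using xy ab aX xyY disj by auto
      show "set [a, x, b, y] \<subseteq> S" using aX xyY by auto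
      fix i assume "Suc i < length [a, x, b, y]"
      hence "i = 0 \<or> i = 1 \<or> i = 2" by auto
      thus "E ([a, x, b, y] ! i) ([a, x, b, y] ! Suc i)" using E sym by auto
    qed (use E sym in auto)
    thus False using forest unfolding induced_forest_def by blast
  qed
  have "Na \<union> Nb \<subseteq> T" using Na_def Nb_def by auto
  hence "card (Na \<union> Nb) + 1 \<le> n" using cT card_mono[OF finT] by fastforce
  moreover have "card (Na \<union> Nb) + card (Na \<inter> Nb) = card Na + card Nb"
    using card_Un_Int[of Na Nb] finT Na_def Nb_def by auto
  ultimately have "card Na + card Nb \<le> n" using inter by linarith
  hence "real (card Na) + real (card Nb) \<le> real n" by linarith
  hence "2 * card Na = n" using ha hb by linarith
  thus ?thesis by (metis dvd_triv_left)
qed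

theorem theorem2p4:
  fixes V1 V2 :: "'a set" and E :: "'a \<Rightarrow> 'a \<Rightarrow> bool" and n :: nat and S :: "'a set"
  assumes "n > 0"
    and "balanced_bipartite V1 V2 E n"
    and "\<forall>v \<in> V1 \<union> V2. real (degree (V1 \<union> V2) E v) \<ge> real n / 2 + 1"
    and "S \<subseteq> V1 \<union> V2" and "card S = n + 1"
    and "induced_forest E S"
    and "min (card (S \<inter> V1)) (card (S \<inter> V2)) = 2"
  shows "even n"
proof -
  from assms(2) have fin: "finite V1" "finite V2" and d: "V1 \<inter> V2 = {}" "card V1 = n" "card V2 = n"
    and bip: "\<forall>x y. E x y \<longrightarrow> (x \<in> V1 \<and> y \<in> V2) \<or> (x \<in> V2 \<and> y \<in> V1)"
    and sym: "\<forall>x y. E x y \<longrightarrow> E y x"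
    unfolding balanced_bipartite_def simple_graph_def by auto
  have deg: "\<forall>v \<in> V1 \<union> V2. real (card {u \<in> V1 \<union> V2. E v u}) \<ge> real n / 2 + 1"
    using assms(3) unfolding degree_def by simp
  show ?thesis
  proof (cases "card (S \<inter> V1) = 2")
    case True
    show ?thesis
      by (rule key[OF fin d bip sym _ assms(4,5,6) True]) (use deg in auto)
  next
    case False
    hence c: "card (S \<inter> V2) = 2" using assms(7) by (metis min_def)
    show ?thesis
      by (rule key[of V2 V1 n E S]) (use fin d bip sym deg assms(4,5,6) c in \<open>auto simp: Un_commute\<close>)
  qed
qed

end
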